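(* In the lace-expansion setting described in the context, suppose $\sum_x|x|^M|\Pi(x)|<\infty$ for a positive integer $M$. Then for every $1\le m\le M$ and $j=1,\dots,d$ there is a constant $c$ (possibly depending on $m$) such that $$\Big|\frac{\partial^m}{\partial k_j^m}\hat G(k)\Big|\le\frac{c}{|k|^{2+m}}\qquad(k\in[-\pi,\pi]^d\setminus\{0\}).$$
   Context: Lace-expansion setting: $d\ge3$; $\Pi:\mathbb{Z}^d\to\mathbb{R}$ is $\mathbb{Z}^d$-symmetric (invariant under permutations and sign changes of coordinates) with $\sum_x|x|^2|\Pi(x)|<\infty$, and $\hat\Pi(k)=\sum_x\Pi(x)e^{-ik\cdot x}$. Let $\hat D(k)=\frac1d\sum_{j=1}^d\cos k_j$, and let $p>0$, $G_0>0$ be constants. $(\hat J,\hat g)$ is one of: (a) $\hat J=2dp\hat D+\hat\Pi$, $\hat g=1$; (b) $\hat J=2dp\hat D(1+\hat\Pi)$, $\hat g=1+\hat\Pi$; (c) $\hat J=2dp\hat D(G_0+\hat\Pi)$, $\hat g=G_0+\hat\Pi$. It is assumed that $\hat J(0)=1$ and that there is $c_1>0$ with $\hat J(0)-\hat J(k)\ge c_1|k|^2$ for all $k\in[-\pi,\pi]^d$. Set $\hat G(k)=\hat g(k)/(1-\hat J(k))$ and $G(x)=\int_{[-\pi,\pi]^d}\frac{d^dk}{(2\pi)^d}e^{ik\cdot x}\hat G(k)$. *)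

theory Defs
  imports "HOL-Analysis.Analysis"
begin

text \<open>Lattice points of Z^d are modelled as int^'d, momenta k as real^'d.\<close>

definition lat :: "int ^ 'd \<Rightarrow> real ^ 'd" where
  "lat x = (\<chi> i. real_of_int (x $ i))"

definition Zd_symmetric :: "(int ^ 'd \<Rightarrow> real) \<Rightarrow> bool" where
  "Zd_symmetric P \<longleftrightarrow>
     (\<forall>\<sigma> s x. \<sigma> permutes (UNIV :: 'd set) \<and> (\<forall>i. s i \<in> {-1, 1 :: int}) \<longrightarrow>
        P (\<chi> i. s i * x $ (\<sigma> i)) = P x)"

definition FT :: "(int ^ 'd \<Rightarrow> real) \<Rightarrow> real ^ 'd \<Rightarrow> complex" where
  "FT P k = (\<Sum>\<^sub>\<infinity> x. complex_of_real (P x) * exp (- \<i> * complex_of_real (k \<bullet> lat x)))"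

definition Dhat :: "real ^ 'd \<Rightarrow> real" where
  "Dhat k = (1 / real CARD('d)) * (\<Sum>j\<in>UNIV. cos (k $ j))"

datatype lace_case = CaseA | CaseB | CaseC

definition Jhat :: "lace_case \<Rightarrow> real \<Rightarrow> real \<Rightarrow> (int ^ 'd \<Rightarrow> real) \<Rightarrow> real ^ 'd \<Rightarrow> complex" where
  "Jhat c p G0 P k = (case c of
      CaseA \<Rightarrow> of_real (2 * real CARD('d) * p * Dhat k) + FT P k
    | CaseB \<Rightarrow> of_real (2 * real CARD('d) * p * Dhat k) * (1 + FT P k)
    | CaseC \<Rightarrow> of_real (2 * real CARD('d) * p * Dhat k) * (of_real G0 + FT P k))"

definition ghat :: "lace_case \<Rightarrow> real \<Rightarrow> (int ^ 'd \<Rightarrow> real) \<Rightarrow> real ^ 'd \<Rightarrow> complex" where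
  "ghat c G0 P k = (case c of
      CaseA \<Rightarrow> 1
    | CaseB \<Rightarrow> 1 + FT P k
    | CaseC \<Rightarrow> of_real G0 + FT P k)"

definition Ghat :: "lace_case \<Rightarrow> real \<Rightarrow> real \<Rightarrow> (int ^ 'd \<Rightarrow> real) \<Rightarrow> real ^ 'd \<Rightarrow> complex" where
  "Ghat c p G0 P k = ghat c G0 P k / (1 - Jhat c p G0 P k)"

fun nvderiv :: "nat \<Rightarrow> (real \<Rightarrow> complex) \<Rightarrow> real \<Rightarrow> complex" where
  "nvderiv 0 f = f"
| "nvderiv (Suc n) f = (\<lambda>t. vector_derivative (nvderiv n f) (at t))"

definition partial_dir :: "nat \<Rightarrow> 'd \<Rightarrow> (real ^ 'd \<Rightarrow> complex) \<Rightarrow> real ^ 'd \<Rightarrow> real \<Rightarrow> complex" where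
  "partial_dir m j F k = nvderiv m (\<lambda>t. F (k + t *\<^sub>R axis j 1))"

definition cube :: "(real ^ 'd) set" where
  "cube = {k. \<forall>i. \<bar>k $ i\<bar> \<le> pi}"

end

theory Submission
  imports Defs
begin


lemma nvderiv_Suc': "nvderiv (Suc n) f = nvderiv n (\<lambda>t. vector_derivative f (at t))"
  by (induction n) auto

lemma vd_cong_open:
  assumes "open S" "t \<in> S" "\<And>s. s \<in> S \<Longrightarrow> f s = g s"
  shows "vector_derivative f (at t) = vector_derivative g (at t)"
proof -
  have "eventually (\<lambda>x. x \<in> UNIV \<longrightarrow> f x = g x) (nhds t)"
    using assms by (auto simp: eventually_nhds)
  from vector_derivative_cong_eq[OF this refl refl] show ?thesis by simp
qed

lemma nvderiv_cong_open:
  assumes "open S" "\<And>s. s \<in> S \<Longrightarrow> f s = g s" "t \<in> S"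
  shows "nvderiv n f t = nvderiv n g t"
  using assms(3)
proof (induction n arbitrary: t)
  case 0 then show ?case using assms by simp
next
  case (Suc n)
  show ?case using vd_cong_open[OF assms(1) Suc.prems Suc.IH] by simp
qed

definition smo :: "nat \<Rightarrow> (real \<Rightarrow> complex) \<Rightarrow> real set \<Rightarrow> bool" where
  "smo n f S \<longleftrightarrow> (\<forall>i<n. \<forall>t\<in>S. nvderiv i f differentiable (at t))"

lemma smo_subset: "smo n f S \<Longrightarrow> T \<subseteq> S \<Longrightarrow> smo n f T"
  unfolding smo_def by blast

lemma smo_le: "smo n f S \<Longrightarrow> m \<le> n \<Longrightarrow> smo m f S"
  unfolding smo_def by auto

lemma nvderiv_explicit:
  assumes S: "open S" and f0: "\<And>t. t \<in> S \<Longrightarrow> fs 0 t = f t"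
    and d: "\<And>i t. i < N \<Longrightarrow> t \<in> S \<Longrightarrow> (fs i has_vector_derivative fs (Suc i) t) (at t)"
  shows "\<And>i t. i \<le> N \<Longrightarrow> t \<in> S \<Longrightarrow> nvderiv i f t = fs i t"
    and "smo N f S"
proof -
  show eq: "nvderiv i f t = fs i t" if "i \<le> N" "t \<in> S" for i t
    using that
  proof (induction i arbitrary: t)
    case 0 then show ?case using f0 by simp
  next
    case (Suc i)
    have "nvderiv (Suc i) f t = vector_derivative (nvderiv i f) (at t)" by simp
    also have "\<dots> = vector_derivative (fs i) (at t)"
      by (rule vd_cong_open[OF S Suc.prems(2)]) (use Suc in auto)
    also have "\<dots> = fs (Suc i) t"
      by (rule vector_derivative_at[OF d]) (use Suc in auto)
    finally show ?case .
  qed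
  show "smo N f S"
    unfolding smo_def
  proof (intro allI impI ballI)
    fix i t assume i: "i < N" and t: "t \<in> S"
    have "(nvderiv i f has_vector_derivative fs (Suc i) t) (at t)"
      by (rule has_vector_derivative_transform_within_open[OF d[OF i t] S t]) (use eq i in auto)
    then show "nvderiv i f differentiable at t" by (rule differentiableI_vector)
  qed
qed

lemma smo_deriv:
  assumes "smo n f S" "i < n" "t \<in> S"
  shows "(nvderiv i f has_vector_derivative nvderiv (Suc i) f t) (at t)"
  using assms unfolding smo_def by (simp add: vector_derivative_works[symmetric])

lemma smo_add:
  assumes S: "open S" and f: "smo n f S" and g: "smo n g S"
  shows "\<And>i t. i \<le> n \<Longrightarrow> t \<in> S \<Longrightarrow> nvderiv i (\<lambda>t. f t + g t) t = nvderiv i f t + nvderiv i g t"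
    and "smo n (\<lambda>t. f t + g t) S"
proof -
  let ?fs = "\<lambda>i t. nvderiv i f t + nvderiv i g t"
  have d: "(?fs i has_vector_derivative ?fs (Suc i) t) (at t)" if "i < n" "t \<in> S" for i t
    using smo_deriv[OF f that] smo_deriv[OF g that] by (intro has_vector_derivative_add)
  show "nvderiv i (\<lambda>t. f t + g t) t = nvderiv i f t + nvderiv i g t" if "i \<le> n" "t \<in> S" for i t
    using nvderiv_explicit(1)[of S ?fs "\<lambda>t. f t + g t" n i t] S d that by auto
  show "smo n (\<lambda>t. f t + g t) S"
    using nvderiv_explicit(2)[of S ?fs "\<lambda>t. f t + g t" n] S d by auto
qed

lemma powr_weight:
  fixes w R a b :: real
  assumes "0 < w" "w \<le> R" "b \<le> a"
  shows "w powr a \<le> (max 1 R) powr (a - b) * w powr b"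
proof -
  have "w powr a = w powr (a - b) * w powr b" by (simp add: powr_add[symmetric])
  also have "w powr (a - b) \<le> (max 1 R) powr (a - b)"
    using assms by (intro powr_mono2) auto
  then have "w powr (a - b) * w powr b \<le> (max 1 R) powr (a - b) * w powr b"
    by (intro mult_right_mono) auto
  finally show ?thesis .
qed

locale wset =
  fixes K :: "'k set" and W :: "'k \<Rightarrow> real" and R :: real and S :: "'k \<Rightarrow> real set"
  assumes W_pos: "k \<in> K \<Longrightarrow> 0 < W k" and W_le: "k \<in> K \<Longrightarrow> W k \<le> R"
    and S_open: "k \<in> K \<Longrightarrow> open (S k)" and S_0: "k \<in> K \<Longrightarrow> 0 \<in> S k"
begin

definition Cl :: "nat \<Rightarrow> real \<Rightarrow> ('k \<Rightarrow> real \<Rightarrow> complex) \<Rightarrow> bool" where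
  "Cl n a F \<longleftrightarrow> (\<exists>C. \<forall>k\<in>K. smo n (F k) (S k) \<and>
      (\<forall>i\<le>n. norm (nvderiv i (F k) 0) \<le> C * W k powr (a - real i)))"

lemma ClE:
  assumes "Cl n a F"
  obtains C where "C \<ge> 0" "\<And>k. k \<in> K \<Longrightarrow> smo n (F k) (S k)"
    "\<And>k i. k \<in> K \<Longrightarrow> i \<le> n \<Longrightarrow> norm (nvderiv i (F k) 0) \<le> C * W k powr (a - real i)"
proof -
  obtain C where C: "\<forall>k\<in>K. smo n (F k) (S k) \<and>
      (\<forall>i\<le>n. norm (nvderiv i (F k) 0) \<le> C * W k powr (a - real i))"
    using assms unfolding Cl_def by blast
  have "norm (nvderiv i (F k) 0) \<le> max C 0 * W k powr (a - real i)" if "k \<in> K" "i \<le> n" for k i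
  proof -
    have "C * W k powr (a - real i) \<le> max C 0 * W k powr (a - real i)"
      by (intro mult_right_mono) auto
    then show ?thesis using C that by force
  qed
  then show ?thesis using that[of "max C 0"] C by auto
qed

lemma ClI:
  assumes "\<And>k. k \<in> K \<Longrightarrow> smo n (F k) (S k)"
    "\<And>k i. k \<in> K \<Longrightarrow> i \<le> n \<Longrightarrow> norm (nvderiv i (F k) 0) \<le> C * W k powr (a - real i)"
  shows "Cl n a F"
  unfolding Cl_def using assms by blast

lemma Cl_le_n: "Cl n a F \<Longrightarrow> m \<le> n \<Longrightarrow> Cl m a F"
  unfolding Cl_def by (meson order_trans smo_le)

lemma Cl_mono:
  assumes "Cl n a F" "b \<le> a"
  shows "Cl n b F"
proof -
  obtain C where C: "C \<ge> 0" "\<And>k. k \<in> K \<Longrightarrow> smo n (F k) (S k)"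
    "\<And>k i. k \<in> K \<Longrightarrow> i \<le> n \<Longrightarrow> norm (nvderiv i (F k) 0) \<le> C * W k powr (a - real i)"
    using assms(1) by (rule ClE) auto
  show ?thesis
  proof (rule ClI[where C="C * (max 1 R) powr (a - b)"])
    fix k i assume k: "k \<in> K" and i: "i \<le> n"
    have "W k powr (a - real i) \<le> (max 1 R) powr (a - b) * W k powr (b - real i)"
      using powr_weight[OF W_pos[OF k] W_le[OF k], of "b - real i" "a - real i"] assms(2) by simp
    then have "C * W k powr (a - real i) \<le> C * ((max 1 R) powr (a - b) * W k powr (b - real i))"
      using C(1) by (intro mult_left_mono) auto
    then show "norm (nvderiv i (F k) 0) \<le> C * (max 1 R) powr (a - b) * W k powr (b - real i)"
      using C(3)[OF k i] by (simp add: mult.assoc)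
  qed (use C in auto)
qed

lemma Cl_add:
  assumes "Cl n a F" "Cl n a G"
  shows "Cl n a (\<lambda>k t. F k t + G k t)"
proof -
  obtain C1 where C1: "C1 \<ge> 0" "\<And>k. k \<in> K \<Longrightarrow> smo n (F k) (S k)"
    "\<And>k i. k \<in> K \<Longrightarrow> i \<le> n \<Longrightarrow> norm (nvderiv i (F k) 0) \<le> C1 * W k powr (a - real i)"
    using assms(1) by (rule ClE) auto
  obtain C2 where C2: "C2 \<ge> 0" "\<And>k. k \<in> K \<Longrightarrow> smo n (G k) (S k)"
    "\<And>k i. k \<in> K \<Longrightarrow> i \<le> n \<Longrightarrow> norm (nvderiv i (G k) 0) \<le> C2 * W k powr (a - real i)"
    using assms(2) by (rule ClE) auto
  show ?thesis
  proof (rule ClI[where C="C1 + C2"])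
    fix k assume k: "k \<in> K"
    show "smo n (\<lambda>t. F k t + G k t) (S k)"
      by (rule smo_add(2)[OF S_open[OF k] C1(2)[OF k] C2(2)[OF k]])
    fix i assume i: "i \<le> n"
    have "nvderiv i (\<lambda>t. F k t + G k t) 0 = nvderiv i (F k) 0 + nvderiv i (G k) 0"
      by (rule smo_add(1)[OF S_open[OF k] C1(2)[OF k] C2(2)[OF k] i S_0[OF k]])
    then have "norm (nvderiv i (\<lambda>t. F k t + G k t) 0) \<le> norm (nvderiv i (F k) 0) + norm (nvderiv i (G k) 0)"
      by (simp add: norm_triangle_ineq)
    also have "\<dots> \<le> C1 * W k powr (a - real i) + C2 * W k powr (a - real i)"
      using C1(3)[OF k i] C2(3)[OF k i] by simp
    finally show "norm (nvderiv i (\<lambda>t. F k t + G k t) 0) \<le> (C1 + C2) * W k powr (a - real i)"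
      by (simp add: distrib_right)
  qed
qed

lemma Cl_deriv:
  assumes "Cl (Suc n) a F"
  shows "Cl n (a - 1) (\<lambda>k t. vector_derivative (F k) (at t))"
proof -
  obtain C where C: "C \<ge> 0" "\<And>k. k \<in> K \<Longrightarrow> smo (Suc n) (F k) (S k)"
    "\<And>k i. k \<in> K \<Longrightarrow> i \<le> Suc n \<Longrightarrow> norm (nvderiv i (F k) 0) \<le> C * W k powr (a - real i)"
    using assms(1) by (rule ClE) auto
  show ?thesis
  proof (rule ClI[where C=C])
    fix k assume k: "k \<in> K"
    show "smo n (\<lambda>t. vector_derivative (F k) (at t)) (S k)"
      using C(2)[OF k] unfolding smo_def nvderiv_Suc'[symmetric] by auto
    fix i assume i: "i \<le> n"
    show "norm (nvderiv i (\<lambda>t. vector_derivative (F k) (at t)) 0) \<le> C * W k powr (a - 1 - real i)"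
      using C(3)[OF k, of "Suc i"] i unfolding nvderiv_Suc'[symmetric] by (simp add: algebra_simps)
  qed
qed

lemma Cl_up:
  assumes D: "Cl n (a - 1) D"
    and der: "\<And>k t. k \<in> K \<Longrightarrow> t \<in> S k \<Longrightarrow> (F k has_vector_derivative D k t) (at t)"
    and base: "\<And>k. k \<in> K \<Longrightarrow> norm (F k 0) \<le> B * W k powr a"
  shows "Cl (Suc n) a F"
proof -
  obtain C where C: "C \<ge> 0" "\<And>k. k \<in> K \<Longrightarrow> smo n (D k) (S k)"
    "\<And>k i. k \<in> K \<Longrightarrow> i \<le> n \<Longrightarrow> norm (nvderiv i (D k) 0) \<le> C * W k powr (a - 1 - real i)"
    using D by (rule ClE) auto
  have eq: "nvderiv (Suc i) (F k) t = nvderiv i (D k) t" if k: "k \<in> K" and t: "t \<in> S k" for k i t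
  proof -
    have "nvderiv (Suc i) (F k) t = nvderiv i (\<lambda>t. vector_derivative (F k) (at t)) t"
      by (simp only: nvderiv_Suc')
    also have "\<dots> = nvderiv i (D k) t"
      by (rule nvderiv_cong_open[OF S_open[OF k] _ t]) (use der[OF k] vector_derivative_at in auto)
    finally show ?thesis .
  qed
  show ?thesis
  proof (rule ClI[where C="max B C"])
    fix k assume k: "k \<in> K"
    show "smo (Suc n) (F k) (S k)"
      unfolding smo_def
    proof (intro allI impI ballI)
      fix i t assume i: "i < Suc n" and t: "t \<in> S k"
      show "nvderiv i (F k) differentiable at t"
      proof (cases i)
        case 0 then show ?thesis using der[OF k t] by (auto intro: differentiableI_vector)
      next
        case (Suc i')
        then have "nvderiv i' (D k) differentiable at t" using C(2)[OF k] i t unfolding smo_def by auto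
        then obtain d where "(nvderiv i' (D k) has_vector_derivative d) (at t)"
          by (auto simp: vector_derivative_works)
        then have "(nvderiv i (F k) has_vector_derivative d) (at t)"
          by (rule has_vector_derivative_transform_within_open[OF _ S_open[OF k] t])
             (use eq[OF k] Suc in auto)
        then show ?thesis by (rule differentiableI_vector)
      qed
    qed
    fix i assume i: "i \<le> Suc n"
    have Wp: "W k powr x \<ge> 0" for x by simp
    show "norm (nvderiv i (F k) 0) \<le> max B C * W k powr (a - real i)"
    proof (cases i)
      case 0
      then show ?thesis using base[OF k] mult_right_mono[OF max.cobounded1[of B C] Wp[of a]] by simp
    next
      case (Suc i')
      then have "norm (nvderiv i (F k) 0) = norm (nvderiv i' (D k) 0)" using eq[OF k S_0[OF k]] by simp
      also have "\<dots> \<le> C * W k powr (a - 1 - real i')" using C(3)[OF k] Suc i by auto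
      also have "\<dots> \<le> max B C * W k powr (a - 1 - real i')" by (intro mult_right_mono) auto
      finally show ?thesis using Suc by (simp add: algebra_simps)
    qed
  qed
qed

lemma Cl_mult:
  assumes "Cl n a F" "Cl n b G"
  shows "Cl n (a + b) (\<lambda>k t. F k t * G k t)"
  using assms
proof (induction n arbitrary: a b F G)
  case 0
  obtain C1 where C1: "C1 \<ge> 0" 
    "\<And>k i. k \<in> K \<Longrightarrow> i \<le> 0 \<Longrightarrow> norm (nvderiv i (F k) 0) \<le> C1 * W k powr (a - real i)"
    using 0(1) by (rule ClE) auto
  obtain C2 where C2: "C2 \<ge> 0"
    "\<And>k i. k \<in> K \<Longrightarrow> i \<le> 0 \<Longrightarrow> norm (nvderiv i (G k) 0) \<le> C2 * W k powr (b - real i)"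
    using 0(2) by (rule ClE) auto
  show ?case
  proof (rule ClI[where C="C1 * C2"])
    fix k i assume k: "k \<in> K" and i: "i \<le> (0::nat)"
    have "norm (F k 0 * G k 0) \<le> (C1 * W k powr a) * (C2 * W k powr b)"
      unfolding norm_mult using C1(2)[OF k, of 0] C2(2)[OF k, of 0] C1(1)
      by (intro mult_mono) auto
    then show "norm (nvderiv i (\<lambda>t. F k t * G k t) 0) \<le> C1 * C2 * W k powr (a + b - real i)"
      using i by (simp add: powr_add algebra_simps)
  qed (simp add: smo_def)
next
  case (Suc n)
  define F' where "F' = (\<lambda>k t. vector_derivative (F k) (at t))"
  define G' where "G' = (\<lambda>k t. vector_derivative (G k) (at t))"
  have F'c: "Cl n (a - 1) F'" unfolding F'_def by (rule Cl_deriv[OF Suc.prems(1)])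
  have G'c: "Cl n (b - 1) G'" unfolding G'_def by (rule Cl_deriv[OF Suc.prems(2)])
  have Fc: "Cl n a F" by (rule Cl_le_n[OF Suc.prems(1)]) simp
  have Gc: "Cl n b G" by (rule Cl_le_n[OF Suc.prems(2)]) simp
  have 1: "Cl n (a + b - 1) (\<lambda>k t. F k t * G' k t)"
    using Suc.IH[OF Fc G'c] by (simp add: algebra_simps)
  have 2: "Cl n (a + b - 1) (\<lambda>k t. F' k t * G k t)"
    using Suc.IH[OF F'c Gc] by (simp add: algebra_simps)
  have D: "Cl n (a + b - 1) (\<lambda>k t. F k t * G' k t + F' k t * G k t)"
    by (rule Cl_add[OF 1 2])
  obtain C1 where C1: "C1 \<ge> 0" "\<And>k. k \<in> K \<Longrightarrow> smo (Suc n) (F k) (S k)"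
    "\<And>k i. k \<in> K \<Longrightarrow> i \<le> Suc n \<Longrightarrow> norm (nvderiv i (F k) 0) \<le> C1 * W k powr (a - real i)"
    using Suc.prems(1) by (rule ClE) auto
  obtain C2 where C2: "C2 \<ge> 0" "\<And>k. k \<in> K \<Longrightarrow> smo (Suc n) (G k) (S k)"
    "\<And>k i. k \<in> K \<Longrightarrow> i \<le> Suc n \<Longrightarrow> norm (nvderiv i (G k) 0) \<le> C2 * W k powr (b - real i)"
    using Suc.prems(2) by (rule ClE) auto
  show ?case
  proof (rule Cl_up[OF D, where B="C1 * C2"])
    fix k t assume k: "k \<in> K" and t: "t \<in> S k"
    have "(F k has_vector_derivative F' k t) (at t)" "(G k has_vector_derivative G' k t) (at t)"
      using smo_deriv[OF C1(2)[OF k], of 0 t] smo_deriv[OF C2(2)[OF k], of 0 t] t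
      by (auto simp: F'_def G'_def)
    then show "((\<lambda>t. F k t * G k t) has_vector_derivative F k t * G' k t + F' k t * G k t) (at t)"
      by (rule has_vector_derivative_mult)
  next
    fix k assume k: "k \<in> K"
    have "norm (F k 0 * G k 0) \<le> (C1 * W k powr a) * (C2 * W k powr b)"
      unfolding norm_mult using C1(3)[OF k, of 0] C2(3)[OF k, of 0] C1(1)
      by (intro mult_mono) auto
    then show "norm (F k 0 * G k 0) \<le> C1 * C2 * W k powr (a + b)"
      by (simp add: powr_add algebra_simps)
  qed
qed

lemma Cl_explicit:
  assumes f0: "\<And>k t. k \<in> K \<Longrightarrow> t \<in> S k \<Longrightarrow> fs k 0 t = F k t"
    and d: "\<And>k i t. k \<in> K \<Longrightarrow> i < n \<Longrightarrow> t \<in> S k \<Longrightarrow> (fs k i has_vector_derivative fs k (Suc i) t) (at t)"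
    and b: "\<And>k i. k \<in> K \<Longrightarrow> i \<le> n \<Longrightarrow> norm (fs k i 0) \<le> C * W k powr (a - real i)"
  shows "Cl n a F"
proof (rule ClI[where C=C])
  fix k assume k: "k \<in> K"
  show "smo n (F k) (S k)"
    by (rule nvderiv_explicit(2)[OF S_open[OF k] f0[OF k] d[OF k]])
  fix i assume i: "i \<le> n"
  show "norm (nvderiv i (F k) 0) \<le> C * W k powr (a - real i)"
    using nvderiv_explicit(1)[OF S_open[OF k] f0[OF k] d[OF k] i S_0[OF k]] b[OF k i] by simp
qed

end


definition ftm :: "(nat \<Rightarrow> complex) \<Rightarrow> (nat \<Rightarrow> real) \<Rightarrow> nat \<Rightarrow> nat \<Rightarrow> real \<Rightarrow> complex" where
  "ftm b y n m t = b m * (- \<i> * complex_of_real (y m)) ^ n * exp (- \<i> * (complex_of_real t * complex_of_real (y m)))"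

lemma norm_ftm: "norm (ftm b y n m t) = norm (b m) * \<bar>y m\<bar> ^ n"
proof -
  have "exp (- \<i> * (complex_of_real t * complex_of_real (y m))) = exp (\<i> * complex_of_real (- (t * y m)))"
    by simp
  then show ?thesis unfolding ftm_def norm_mult norm_power
    by (simp only: norm_exp_i_times) simp
qed

lemma ftm_deriv: "((ftm b y n m) has_vector_derivative ftm b y (Suc n) m t) (at t)"
proof -
  have "((\<lambda>z. exp (- \<i> * (z * complex_of_real (y m)))) has_field_derivative
      exp (- \<i> * (complex_of_real t * complex_of_real (y m))) * (- \<i> * complex_of_real (y m))) (at (of_real t))"
    by (auto intro!: derivative_eq_intros)
  from has_vector_derivative_real_field[OF this]
  have "((\<lambda>x. exp (- \<i> * (complex_of_real x * complex_of_real (y m)))) has_vector_derivative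
      exp (- \<i> * (complex_of_real t * complex_of_real (y m))) * (- \<i> * complex_of_real (y m))) (at t)" .
  from has_vector_derivative_mult_right[OF this, of "b m * (- \<i> * complex_of_real (y m)) ^ n"]
  show ?thesis unfolding ftm_def by (simp add: algebra_simps)
qed

lemma fser_deriv_nat:
  fixes b :: "nat \<Rightarrow> complex" and y :: "nat \<Rightarrow> real"
  assumes s1: "summable (\<lambda>m. norm (b m) * \<bar>y m\<bar> ^ Suc n)"
    and s0: "summable (\<lambda>m. norm (b m) * \<bar>y m\<bar> ^ n)"
  shows "((\<lambda>t. \<Sum>m. ftm b y n m t) has_vector_derivative (\<Sum>m. ftm b y (Suc n) m t)) (at t)"
proof -
  define A where "A x = (\<Sum>m. ftm b y (Suc n) m x)" for x
  have ul: "uniform_limit UNIV (\<lambda>N x. \<Sum>i<N. ftm b y (Suc n) i x) A sequentially"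
    unfolding A_def by (rule Weierstrass_m_test[OF _ s1]) (simp add: norm_ftm)
  have sm: "summable (\<lambda>m. ftm b y n m x)" for x
    by (rule summable_norm_cancel) (simp add: norm_ftm s0)
  have "\<exists>g. \<forall>x\<in>UNIV. (\<lambda>m. ftm b y n m x) sums (g x) \<and>
      (g has_derivative (\<lambda>h. h *\<^sub>R A x)) (at x within UNIV)"
  proof (rule has_derivative_series[where f'="\<lambda>m x h. h *\<^sub>R ftm b y (Suc n) m x"])
    show "convex (UNIV :: real set)" by simp
    show "(ftm b y n m has_derivative (\<lambda>h. h *\<^sub>R ftm b y (Suc n) m x)) (at x within UNIV)" for m x
      using ftm_deriv[of b y n m x] by (simp add: has_vector_derivative_def)
    show "\<forall>\<^sub>F N in sequentially. \<forall>x\<in>UNIV. \<forall>h. norm ((\<Sum>i<N. h *\<^sub>R ftm b y (Suc n) i x) - h *\<^sub>R A x) \<le> e * norm h"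
      if e: "e > 0" for e
    proof -
      have "\<forall>\<^sub>F N in sequentially. \<forall>x\<in>UNIV. dist (\<Sum>i<N. ftm b y (Suc n) i x) (A x) < e"
        by (rule uniform_limitD[OF ul e])
      then show ?thesis
      proof (rule eventually_mono)
        fix N assume N: "\<forall>x\<in>UNIV. dist (\<Sum>i<N. ftm b y (Suc n) i x) (A x) < e"
        show "\<forall>x\<in>UNIV. \<forall>h. norm ((\<Sum>i<N. h *\<^sub>R ftm b y (Suc n) i x) - h *\<^sub>R A x) \<le> e * norm h"
        proof (intro ballI allI)
          fix x :: real and h :: real
          have "norm ((\<Sum>i<N. h *\<^sub>R ftm b y (Suc n) i x) - h *\<^sub>R A x)
              = \<bar>h\<bar> * dist (\<Sum>i<N. ftm b y (Suc n) i x) (A x)"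
            by (simp add: scaleR_sum_right[symmetric] scaleR_diff_right[symmetric] dist_norm)
          also have "\<dots> \<le> \<bar>h\<bar> * e" using N by (intro mult_left_mono) (auto intro: less_imp_le)
          finally show "norm ((\<Sum>i<N. h *\<^sub>R ftm b y (Suc n) i x) - h *\<^sub>R A x) \<le> e * norm h"
            by (simp add: mult.commute)
        qed
      qed
    qed
    show "(0::real) \<in> UNIV" by simp
    show "(\<lambda>m. ftm b y n m 0) sums (\<Sum>m. ftm b y n m 0)" using sm by (simp add: summable_sums)
  qed
  then obtain g where g: "\<And>x. (\<lambda>m. ftm b y n m x) sums (g x)"
    "\<And>x. (g has_derivative (\<lambda>h. h *\<^sub>R A x)) (at x)" by auto
  have "g = (\<lambda>t. \<Sum>m. ftm b y n m t)" using g(1) by (auto simp: sums_iff)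
  with g(2)[of t] show ?thesis by (simp add: has_vector_derivative_def A_def)
qed

lemma infsum_as_suminf:
  fixes f :: "'a \<Rightarrow> complex"
  assumes c: "countable (UNIV :: 'a set)" "infinite (UNIV :: 'a set)"
    and s: "(\<lambda>x. norm (f x)) summable_on UNIV"
  shows "infsum f UNIV = (\<Sum>m. f (from_nat_into UNIV m))"
    and "summable (\<lambda>m. norm (f (from_nat_into UNIV m)))"
proof -
  let ?e = "from_nat_into (UNIV :: 'a set)"
  have bij: "bij_betw ?e UNIV UNIV" by (rule bij_betw_from_nat_into[OF c])
  have sn: "(\<lambda>m. norm (f (?e m))) summable_on UNIV"
    using summable_on_reindex_bij_betw[OF bij, of "\<lambda>x. norm (f x)"] s by simp
  then show "summable (\<lambda>m. norm (f (?e m)))" by (rule summable_on_imp_summable)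
  have "(\<lambda>m. f (?e m)) summable_on UNIV" by (rule abs_summable_summable[OF sn])
  then have "(\<lambda>m. f (?e m)) sums infsum (\<lambda>m. f (?e m)) UNIV"
    by (intro has_sum_imp_sums has_sum_infsum)
  moreover have "infsum (\<lambda>m. f (?e m)) UNIV = infsum f UNIV"
    by (rule infsum_reindex_bij_betw[OF bij])
  ultimately show "infsum f UNIV = (\<Sum>m. f (?e m))" by (simp add: sums_iff)
qed

definition ftg :: "('a \<Rightarrow> complex) \<Rightarrow> ('a \<Rightarrow> real) \<Rightarrow> nat \<Rightarrow> real \<Rightarrow> complex" where
  "ftg b y n t = (\<Sum>\<^sub>\<infinity>x. b x * (- \<i> * complex_of_real (y x)) ^ n * exp (- \<i> * (complex_of_real t * complex_of_real (y x))))"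

lemma fser_deriv:
  fixes b :: "'a \<Rightarrow> complex" and y :: "'a \<Rightarrow> real"
  assumes c: "countable (UNIV :: 'a set)" "infinite (UNIV :: 'a set)"
    and s1: "(\<lambda>x. norm (b x) * \<bar>y x\<bar> ^ Suc n) summable_on UNIV"
    and s0: "(\<lambda>x. norm (b x) * \<bar>y x\<bar> ^ n) summable_on UNIV"
  shows "(ftg b y n has_vector_derivative ftg b y (Suc n) t) (at t)"
proof -
  let ?e = "from_nat_into (UNIV :: 'a set)"
  have nrm: "norm (b x * (- \<i> * complex_of_real (y x)) ^ k * exp (- \<i> * (complex_of_real t * complex_of_real (y x))))
      = norm (b x) * \<bar>y x\<bar> ^ k" for x k t
    using norm_ftm[of "\<lambda>_. b x" "\<lambda>_. y x" k 0 t] by (simp add: ftm_def)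
  have eq: "ftg b y k t = (\<Sum>m. ftm (\<lambda>m. b (?e m)) (\<lambda>m. y (?e m)) k m t)"
    and sk: "summable (\<lambda>m. norm (b (?e m)) * \<bar>y (?e m)\<bar> ^ k)"
    if "(\<lambda>x. norm (b x) * \<bar>y x\<bar> ^ k) summable_on UNIV" for k t
    using infsum_as_suminf[OF c, of "\<lambda>x. b x * (- \<i> * complex_of_real (y x)) ^ k * exp (- \<i> * (complex_of_real t * complex_of_real (y x)))"]
      that unfolding nrm by (simp_all add: ftg_def ftm_def)
  have "((\<lambda>t. \<Sum>m. ftm (\<lambda>m. b (?e m)) (\<lambda>m. y (?e m)) n m t) has_vector_derivative
      (\<Sum>m. ftm (\<lambda>m. b (?e m)) (\<lambda>m. y (?e m)) (Suc n) m t)) (at t)"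
    by (rule fser_deriv_nat[OF sk[OF s1] sk[OF s0]])
  moreover have "ftg b y n = (\<lambda>t. \<Sum>m. ftm (\<lambda>m. b (?e m)) (\<lambda>m. y (?e m)) n m t)"
    using eq[OF s0] by (intro ext) simp
  ultimately show ?thesis using eq[OF s1] by simp
qed

lemma ftg_bound:
  assumes "(\<lambda>x. norm (b x) * \<bar>y x\<bar> ^ n) summable_on UNIV"
  shows "norm (ftg b y n t) \<le> (\<Sum>\<^sub>\<infinity>x. norm (b x) * \<bar>y x\<bar> ^ n)"
proof -
  have nrm: "norm (b x * (- \<i> * complex_of_real (y x)) ^ n * exp (- \<i> * (complex_of_real t * complex_of_real (y x))))
      = norm (b x) * \<bar>y x\<bar> ^ n" for x
    using norm_ftm[of "\<lambda>_. b x" "\<lambda>_. y x" n 0 t] by (simp add: ftm_def)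
  show ?thesis unfolding ftg_def
    using norm_infsum_bound[of "\<lambda>x. b x * (- \<i> * complex_of_real (y x)) ^ n * exp (- \<i> * (complex_of_real t * complex_of_real (y x)))" UNIV]
      assms unfolding nrm by simp
qed


lemma vd_shift: "vector_derivative (\<lambda>t. g (t + s)) (at t0) = vector_derivative g (at (t0 + s))"
proof -
  have "((\<lambda>t. g (t + s)) has_vector_derivative D) (at t0) \<longleftrightarrow> (g has_vector_derivative D) (at (t0 + s))" for D
  proof
    assume a: "((\<lambda>t. g (t + s)) has_vector_derivative D) (at t0)"
    have "((\<lambda>u. u - s) has_vector_derivative 1) (at (t0 + s))"
      by (auto intro!: derivative_eq_intros)
    moreover have "((\<lambda>t. g (t + s)) has_vector_derivative D) (at ((\<lambda>u. u - s) (t0 + s)))"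
      using a by simp
    ultimately have "(((\<lambda>t. g (t + s)) \<circ> (\<lambda>u. u - s)) has_vector_derivative 1 *\<^sub>R D) (at (t0 + s))"
      by (rule vector_diff_chain_at)
    then show "(g has_vector_derivative D) (at (t0 + s))" by (simp add: o_def)
  next
    assume a: "(g has_vector_derivative D) (at (t0 + s))"
    have "((\<lambda>u. u + s) has_vector_derivative 1) (at t0)"
      by (auto intro!: derivative_eq_intros)
    moreover have "(g has_vector_derivative D) (at ((\<lambda>u. u + s) t0))"
      using a by simp
    ultimately have "((g \<circ> (\<lambda>u. u + s)) has_vector_derivative 1 *\<^sub>R D) (at t0)"
      by (rule vector_diff_chain_at)
    then show "((\<lambda>t. g (t + s)) has_vector_derivative D) (at t0)" by (simp add: o_def)
  qed
  then show ?thesis unfolding vector_derivative_def by simp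
qed

lemma nvderiv_shift: "nvderiv n (\<lambda>t. f (t + s)) = (\<lambda>t. nvderiv n f (t + s))"
proof (induction n)
  case 0 then show ?case by simp
next
  case (Suc n)
  show ?case by (simp add: Suc vd_shift[of "nvderiv n f"])
qed

lemma even_deriv0:
  fixes f :: "real \<Rightarrow> complex"
  assumes ev: "\<And>t. f (- t) = f t" and d: "f differentiable (at 0)"
  shows "vector_derivative f (at 0) = 0"
proof -
  define D where "D = vector_derivative f (at 0)"
  have fD: "(f has_vector_derivative D) (at 0)" using d by (simp add: D_def vector_derivative_works)
  have "(uminus has_vector_derivative (-1::real)) (at (0::real))"
    by (auto intro!: derivative_eq_intros)
  moreover have "(f has_vector_derivative D) (at (uminus (0::real)))" using fD by simp
  ultimately have "((f \<circ> uminus) has_vector_derivative (-1::real) *\<^sub>R D) (at 0)"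
    by (rule vector_diff_chain_at)
  moreover have "f \<circ> uminus = f" using ev by (auto simp: o_def)
  ultimately have "(f has_vector_derivative - D) (at 0)" by simp
  with fD have "D = - D" by (rule vector_derivative_unique_at)
  then show ?thesis unfolding D_def[symmetric] by simp
qed

lemma mvt_bound:
  fixes f f' :: "real \<Rightarrow> complex"
  assumes d: "\<And>x. (f has_vector_derivative f' x) (at x)" and B: "\<And>x. norm (f' x) \<le> B"
  shows "norm (f a - f b) \<le> B * \<bar>a - b\<bar>"
proof -
  have main: "norm (f v - f u) \<le> B * (v - u)" if uv: "u < v" for u v
  proof -
    have cont: "continuous_on {u..v} f"
      by (rule continuous_on_vector_derivative) (use d has_vector_derivative_at_within in blast)
    obtain x where "norm (f v - f u) \<le> norm ((v - u) *\<^sub>R f' x)"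
      using mvt_general[OF uv cont, of "\<lambda>x h. h *\<^sub>R f' x"] d unfolding has_vector_derivative_def by blast
    also have "norm ((v - u) *\<^sub>R f' x) \<le> (v - u) * B" using B[of x] uv by (simp add: mult_left_mono)
    finally show ?thesis by (simp add: mult.commute)
  qed
  consider "a < b" | "a = b" | "b < a" by linarith
  then show ?thesis
  proof cases
    case 1 then show ?thesis using main[OF 1] by (simp add: norm_minus_commute)
  next
    case 2 then show ?thesis by simp
  next
    case 3 then show ?thesis using main[OF 3] by simp
  qed
qed

interpretation B: wset "UNIV :: 'k set" "\<lambda>_. 1" 1 "\<lambda>_. UNIV"
  by unfold_locales auto

lemma B_Cl_iff: "B.Cl n a F \<longleftrightarrow> (\<exists>C. \<forall>k. smo n (F k) UNIV \<and> (\<forall>i\<le>n. norm (nvderiv i (F k) 0) \<le> C))"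
  unfolding B.Cl_def by simp

lemma B_Cl_any: "B.Cl n a F \<Longrightarrow> B.Cl n b F"
  unfolding B_Cl_iff by blast

lemma B_Cl_const: "B.Cl n a (\<lambda>k t. c)"
proof (rule B.Cl_explicit[where fs="\<lambda>k i t. if i = 0 then c else 0" and C="norm c"])
  fix k i t assume "i < n"
  show "((\<lambda>t. if i = 0 then c else 0) has_vector_derivative (if Suc i = 0 then c else 0)) (at t)"
    by (cases "i = 0") auto
qed auto

lemma Cl_transfer:
  assumes ws: "wset K W R S" and BC: "B.Cl n a F"
  shows "wset.Cl K W S n 0 F"
proof -
  interpret M: wset K W R S by (rule ws)
  obtain C where C: "\<And>k. smo n (F k) UNIV" "\<And>k i. i \<le> n \<Longrightarrow> norm (nvderiv i (F k) 0) \<le> C"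
    using BC unfolding B_Cl_iff by blast
  have C0: "C \<ge> 0" using C(2)[of 0] norm_ge_zero order_trans by blast
  show ?thesis
  proof (rule M.ClI[where C="C * (max 1 R) powr (real n)"])
    fix k assume k: "k \<in> K"
    show "smo n (F k) (S k)" using smo_subset[OF C(1)] by blast
    fix i assume i: "i \<le> n"
    have "1 = W k powr 0" using M.W_pos[OF k] by simp
    also have "\<dots> \<le> (max 1 R) powr (0 - (0 - real i)) * W k powr (0 - real i)"
      by (rule powr_weight[OF M.W_pos[OF k] M.W_le[OF k]]) simp
    also have "\<dots> \<le> (max 1 R) powr (real n) * W k powr (0 - real i)"
      using i by (intro mult_right_mono powr_mono) auto
    finally have "C * 1 \<le> C * ((max 1 R) powr (real n) * W k powr (0 - real i))"
      using C0 by (intro mult_left_mono) auto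
    then show "norm (nvderiv i (F k) 0) \<le> C * (max 1 R) powr (real n) * W k powr (0 - real i)"
      using C(2)[OF i, of k] by (simp add: mult.assoc)
  qed
qed


lemma norm_exp_mi': "norm (exp (- (\<i> * complex_of_real r))) = 1"
proof -
  have "exp (- (\<i> * complex_of_real r)) = exp (\<i> * complex_of_real (- r))" by simp
  then show ?thesis by (simp only: norm_exp_i_times)
qed

lemma norm_exp_mi: "norm (exp (- \<i> * complex_of_real r)) = 1"
proof -
  have "exp (- \<i> * complex_of_real r) = exp (\<i> * complex_of_real (- r))" by simp
  then show ?thesis by (simp only: norm_exp_i_times)
qed

definition Tl :: "(int ^ 'd \<Rightarrow> real) \<Rightarrow> 'd \<Rightarrow> nat \<Rightarrow> real ^ 'd \<Rightarrow> real \<Rightarrow> complex" where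
  "Tl P j n k = ftg (\<lambda>x. complex_of_real (P x) * exp (- \<i> * complex_of_real (k \<bullet> lat x))) (\<lambda>x. real_of_int (x $ j)) n"

lemma lat_nth: "lat x $ i = real_of_int (x $ i)"
  by (simp add: lat_def)

lemma FT_line: "FT P (k + t *\<^sub>R axis j 1) = Tl P j 0 k t"
proof -
  have eqx: "complex_of_real (P x) * exp (- \<i> * complex_of_real ((k + t *\<^sub>R axis j 1) \<bullet> lat x)) =
    complex_of_real (P x) * exp (- \<i> * complex_of_real (k \<bullet> lat x)) * (- \<i> * complex_of_real (real_of_int (x $ j))) ^ 0 *
    exp (- \<i> * (complex_of_real t * complex_of_real (real_of_int (x $ j))))" for x
  proof -
    have "(k + t *\<^sub>R axis j 1) \<bullet> lat x = k \<bullet> lat x + t * real_of_int (x $ j)"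
      by (simp add: inner_add_left inner_axis' lat_nth)
    then have "complex_of_real ((k + t *\<^sub>R axis j 1) \<bullet> lat x) =
      complex_of_real (k \<bullet> lat x) + complex_of_real t * complex_of_real (real_of_int (x $ j))"
      by (simp only: of_real_add of_real_mult)
    then have "- \<i> * complex_of_real ((k + t *\<^sub>R axis j 1) \<bullet> lat x) =
      - \<i> * complex_of_real (k \<bullet> lat x) + - \<i> * (complex_of_real t * complex_of_real (real_of_int (x $ j)))"
      by (simp only: distrib_left)
    then show ?thesis by (simp only: exp_add) simp
  qed
  then show ?thesis unfolding FT_def Tl_def ftg_def by (simp only: eqx)
qed

lemma lat_ge1: "x \<noteq> 0 \<Longrightarrow> 1 \<le> norm (lat x)"
proof -
  assume "x \<noteq> 0"
  then obtain i where i: "x $ i \<noteq> 0" by (auto simp: vec_eq_iff)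
  then have "1 \<le> \<bar>x $ i\<bar>" by linarith
  then have "1 \<le> \<bar>lat x $ i\<bar>" by (simp add: lat_nth)
  also have "\<dots> \<le> norm (lat x)" by (rule component_le_norm_cart)
  finally show ?thesis .
qed

lemma P_summable:
  assumes sum2: "(\<lambda>x. norm (lat x) ^ 2 * \<bar>P x\<bar>) summable_on UNIV"
  shows "(\<lambda>x. \<bar>P x\<bar>) summable_on UNIV"
proof -
  have f0: "(\<lambda>x. if x = 0 then \<bar>P 0\<bar> else 0) summable_on UNIV"
  proof -
    have "(\<lambda>x. if x = 0 then \<bar>P 0\<bar> else 0) summable_on {0}" by (rule summable_on_finite) simp
    then show ?thesis by (rule summable_on_cong_neutral[THEN iffD1, rotated -1]) auto
  qed
  have "(\<lambda>x. (if x = 0 then \<bar>P 0\<bar> else 0) + norm (lat x) ^ 2 * \<bar>P x\<bar>) summable_on UNIV"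
    by (rule summable_on_add[OF f0 sum2])
  then show ?thesis
  proof (rule summable_on_comparison_test)
    fix x :: "int ^ 'a"
    show "\<bar>P x\<bar> \<le> (if x = 0 then \<bar>P 0\<bar> else 0) + norm (lat x) ^ 2 * \<bar>P x\<bar>"
    proof (cases "x = 0")
      case False
      then have "1 \<le> norm (lat x) ^ 2" using lat_ge1[OF False] by (simp add: one_le_power)
      then have "1 * \<bar>P x\<bar> \<le> norm (lat x) ^ 2 * \<bar>P x\<bar>" by (intro mult_right_mono) auto
      then show ?thesis using False by simp
    qed simp
  qed simp
qed


lemma moment_summable:
  fixes P :: "int ^ 'd \<Rightarrow> real"
  assumes sum2: "(\<lambda>x. norm (lat x) ^ 2 * \<bar>P x\<bar>) summable_on UNIV"
    and sumM: "(\<lambda>x. norm (lat x) ^ M * \<bar>P x\<bar>) summable_on UNIV"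
    and n: "n \<le> max M 2"
  shows "(\<lambda>x. \<bar>P x\<bar> * \<bar>real_of_int (x $ j)\<bar> ^ n) summable_on UNIV"
proof -
  have "(\<lambda>x. \<bar>P x\<bar> + norm (lat x) ^ 2 * \<bar>P x\<bar> + norm (lat x) ^ M * \<bar>P x\<bar>) summable_on UNIV"
    by (intro summable_on_add P_summable sum2 sumM)
  then show ?thesis
  proof (rule summable_on_comparison_test)
    fix x :: "int ^ 'd"
    define L where "L = norm (lat x)"
    have aL: "\<bar>real_of_int (x $ j)\<bar> \<le> L" unfolding L_def using component_le_norm_cart[of "lat x" j]
      by (simp add: lat_nth)
    have "\<bar>real_of_int (x $ j)\<bar> ^ n \<le> 1 + L ^ 2 + L ^ M"
    proof (cases "L \<le> 1")
      case True
      then have "\<bar>real_of_int (x $ j)\<bar> ^ n \<le> 1" using aL by (intro power_le_one) auto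
      moreover have "0 \<le> L ^ 2" "0 \<le> L ^ M" unfolding L_def by auto
      ultimately show ?thesis by linarith
    next
      case False
      then have "\<bar>real_of_int (x $ j)\<bar> ^ n \<le> L ^ n" using aL by (intro power_mono) auto
      also have "\<dots> \<le> L ^ max M 2" using False n by (intro power_increasing) auto
      also have "\<dots> \<le> L ^ 2 + L ^ M" using False by (simp add: max_def)
      finally show ?thesis by simp
    qed
    then have "\<bar>P x\<bar> * \<bar>real_of_int (x $ j)\<bar> ^ n \<le> \<bar>P x\<bar> * (1 + L ^ 2 + L ^ M)"
      by (intro mult_left_mono) auto
    moreover have "\<bar>P x\<bar> * (1 + L ^ 2 + L ^ M) = \<bar>P x\<bar> + L ^ 2 * \<bar>P x\<bar> + L ^ M * \<bar>P x\<bar>"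
      by (simp add: distrib_left mult.commute)
    ultimately show "\<bar>P x\<bar> * \<bar>real_of_int (x $ j)\<bar> ^ n \<le> \<bar>P x\<bar> + norm (lat x) ^ 2 * \<bar>P x\<bar> + norm (lat x) ^ M * \<bar>P x\<bar>"
      unfolding L_def[symmetric] by linarith
  qed simp
qed

lemma infinite_int_vec: "infinite (UNIV :: (int ^ 'd) set)"
proof
  assume fin: "finite (UNIV :: (int ^ 'd) set)"
  have "inj (\<lambda>n::nat. (vec (int n) :: int ^ 'd))"
  proof (rule injI)
    fix m n :: nat assume "(vec (int m) :: int ^ 'd) = vec (int n)"
    then have "(vec (int m) :: int ^ 'd) $ undefined = vec (int n) $ undefined" by simp
    then show "m = n" by simp
  qed
  then have "infinite (range (\<lambda>n::nat. (vec (int n) :: int ^ 'd)))" by (rule range_inj_infinite)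
  moreover have "finite (range (\<lambda>n::nat. (vec (int n) :: int ^ 'd)))"
    by (rule finite_subset[OF subset_UNIV fin])
  ultimately show False by contradiction
qed


lemma Tl_deriv:
  fixes P :: "int ^ 'd \<Rightarrow> real"
  assumes sum2: "(\<lambda>x. norm (lat x) ^ 2 * \<bar>P x\<bar>) summable_on UNIV"
    and sumM: "(\<lambda>x. norm (lat x) ^ M * \<bar>P x\<bar>) summable_on UNIV"
    and n: "n < max M 2"
  shows "(Tl P j n k has_vector_derivative Tl P j (Suc n) k t) (at t)"
proof -
  have nb: "norm (complex_of_real (P x) * exp (- \<i> * complex_of_real (k \<bullet> lat x))) = \<bar>P x\<bar>" for x
    by (simp only: norm_mult norm_exp_mi) simp
  have s1: "(\<lambda>x. \<bar>P x\<bar> * \<bar>real_of_int (x $ j)\<bar> ^ Suc n) summable_on UNIV"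
    by (rule moment_summable[OF sum2 sumM]) (use n in simp)
  have s0: "(\<lambda>x. \<bar>P x\<bar> * \<bar>real_of_int (x $ j)\<bar> ^ n) summable_on UNIV"
    by (rule moment_summable[OF sum2 sumM]) (use n in simp)
  show ?thesis unfolding Tl_def
    by (rule fser_deriv) (use s1 s0 infinite_int_vec in \<open>simp_all add: norm_exp_mi' norm_mult\<close>)
qed

lemma Tl_bound:
  fixes P :: "int ^ 'd \<Rightarrow> real"
  assumes sum2: "(\<lambda>x. norm (lat x) ^ 2 * \<bar>P x\<bar>) summable_on UNIV"
    and sumM: "(\<lambda>x. norm (lat x) ^ M * \<bar>P x\<bar>) summable_on UNIV"
    and n: "n \<le> max M 2"
  shows "norm (Tl P j n k t) \<le> (\<Sum>\<^sub>\<infinity>x. \<bar>P x\<bar> * \<bar>real_of_int (x $ j)\<bar> ^ n)"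
proof -
  have nb: "norm (complex_of_real (P x) * exp (- \<i> * complex_of_real (k \<bullet> lat x))) = \<bar>P x\<bar>" for x
    by (simp only: norm_mult norm_exp_mi) simp
  show ?thesis unfolding Tl_def
    using ftg_bound[of "\<lambda>x. complex_of_real (P x) * exp (- \<i> * complex_of_real (k \<bullet> lat x))" "\<lambda>x. real_of_int (x $ j)" n t]
      moment_summable[OF sum2 sumM n] by (simp add: norm_exp_mi' norm_mult)
qed

lemma Tl_Cl:
  fixes P :: "int ^ 'd \<Rightarrow> real"
  assumes sum2: "(\<lambda>x. norm (lat x) ^ 2 * \<bar>P x\<bar>) summable_on UNIV"
    and sumM: "(\<lambda>x. norm (lat x) ^ M * \<bar>P x\<bar>) summable_on UNIV"
  shows "B.Cl (max M 2) a (Tl P j 0)"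
proof (rule B.Cl_explicit[where fs="\<lambda>k i. Tl P j i k" and C="\<Sum>i\<le>max M 2. (\<Sum>\<^sub>\<infinity>x. \<bar>P x\<bar> * \<bar>real_of_int (x $ j)\<bar> ^ i)"])
  fix k i t assume "i < max M 2"
  then show "(Tl P j i k has_vector_derivative Tl P j (Suc i) k t) (at t)"
    by (rule Tl_deriv[OF sum2 sumM])
next
  fix k :: "real ^ 'd" and i assume i: "i \<le> max M 2"
  have "norm (Tl P j i k 0) \<le> (\<Sum>\<^sub>\<infinity>x. \<bar>P x\<bar> * \<bar>real_of_int (x $ j)\<bar> ^ i)"
    by (rule Tl_bound[OF sum2 sumM i])
  also have "\<dots> \<le> (\<Sum>i\<le>max M 2. (\<Sum>\<^sub>\<infinity>x. \<bar>P x\<bar> * \<bar>real_of_int (x $ j)\<bar> ^ i))"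
    by (rule member_le_sum) (use i in \<open>auto intro: infsum_nonneg\<close>)
  finally show "norm (Tl P j i k 0) \<le> (\<Sum>i\<le>max M 2. (\<Sum>\<^sub>\<infinity>x. \<bar>P x\<bar> * \<bar>real_of_int (x $ j)\<bar> ^ i)) * 1 powr (a - real i)"
    by simp
qed auto


definition Dl :: "'d \<Rightarrow> real \<Rightarrow> nat \<Rightarrow> real ^ 'd \<Rightarrow> real \<Rightarrow> complex" where
  "Dl j p n k t = (if n = 0 then complex_of_real (2 * real CARD('d) * p * Dhat (k + t *\<^sub>R axis j 1))
     else complex_of_real (2 * p * cos (k $ j + t + real n * pi / 2)))"

lemma Dhat_line:
  "2 * real CARD('d) * p * Dhat (k + t *\<^sub>R axis j 1) =
     2 * p * (\<Sum>i\<in>UNIV - {j}. cos (k $ i)) + 2 * p * cos (k $ j + t)"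
  for k :: "real ^ 'd"
proof -
  have "(\<Sum>i\<in>UNIV. cos ((k + t *\<^sub>R axis j 1) $ i)) = cos ((k + t *\<^sub>R axis j 1) $ j) + (\<Sum>i\<in>UNIV - {j}. cos ((k + t *\<^sub>R axis j 1) $ i))"
    by (rule sum.remove) auto
  also have "(\<Sum>i\<in>UNIV - {j}. cos ((k + t *\<^sub>R axis j 1) $ i)) = (\<Sum>i\<in>UNIV - {j}. cos (k $ i))"
    by (rule sum.cong) (auto simp: axis_def)
  finally have e: "(\<Sum>i\<in>UNIV. cos ((k + t *\<^sub>R axis j 1) $ i)) = cos (k $ j + t) + (\<Sum>i\<in>UNIV - {j}. cos (k $ i))"
    by simp
  have d: "real CARD('d) > 0" by simp
  show ?thesis unfolding Dhat_def e using d by (simp add: field_simps)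
qed

lemma cos_deriv_shift: "((\<lambda>t. cos (a + t)) has_real_derivative cos (a + t + pi / 2)) (at t)"
proof -
  have "((\<lambda>t. cos (a + t)) has_real_derivative - sin (a + t)) (at t)"
    by (auto intro!: derivative_eq_intros)
  moreover have "- sin (a + t) = cos (a + t + pi / 2)" by (simp add: cos_add)
  ultimately show ?thesis by simp
qed

lemma Dl_deriv: "(Dl j p n k has_vector_derivative Dl j p (Suc n) k t) (at t)"
proof (cases "n = 0")
  case True
  define A where "A = 2 * p * (\<Sum>i\<in>UNIV - {j}. cos (k $ i))"
  have eq: "Dl j p 0 k = (\<lambda>t. complex_of_real (A + 2 * p * cos (k $ j + t)))"
    by (intro ext) (simp only: Dl_def Dhat_line A_def if_True simp_thms(6))
  have D0: "((\<lambda>t. A + 2 * p * cos (k $ j + t)) has_real_derivative 0 + 2 * p * cos (k $ j + t + pi / 2)) (at t)"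
    by (rule DERIV_add[OF DERIV_const DERIV_cmult[OF cos_deriv_shift]])
  have v: "Dl j p (Suc 0) k t = complex_of_real (0 + 2 * p * cos (k $ j + t + pi / 2))"
    unfolding Dl_def by simp
  have "(Dl j p 0 k has_vector_derivative Dl j p (Suc 0) k t) (at t)"
    unfolding eq v by (rule has_vector_derivative_of_real[OF D0])
  then show ?thesis unfolding True .
next
  case False
  have eq: "Dl j p n k = (\<lambda>t. complex_of_real (2 * p * cos ((k $ j + real n * pi / 2) + t)))"
    by (intro ext) (simp add: Dl_def False ac_simps)
  have D0: "((\<lambda>t. 2 * p * cos ((k $ j + real n * pi / 2) + t)) has_real_derivative
      2 * p * cos ((k $ j + real n * pi / 2) + t + pi / 2)) (at t)"
    by (rule DERIV_cmult[OF cos_deriv_shift])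
  have arg: "k $ j + t + real (Suc n) * pi / 2 = (k $ j + real n * pi / 2) + t + pi / 2"
    by (simp add: field_simps)
  have v: "Dl j p (Suc n) k t = complex_of_real (2 * p * cos ((k $ j + real n * pi / 2) + t + pi / 2))"
    unfolding Dl_def arg by simp
  show ?thesis
    unfolding eq v by (rule has_vector_derivative_of_real[OF D0])
qed

lemma Dhat_abs: "\<bar>Dhat k\<bar> \<le> 1"
proof -
  have "\<bar>\<Sum>i\<in>UNIV. cos (k $ i)\<bar> \<le> (\<Sum>i\<in>(UNIV :: 'a set). 1)"
    by (rule order_trans[OF sum_abs sum_mono]) simp
  then have "\<bar>\<Sum>i\<in>UNIV. cos (k $ i)\<bar> \<le> real CARD('a)" by simp
  then show ?thesis unfolding Dhat_def by (simp add: abs_mult field_simps)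
qed

lemma Dl_bound:
  fixes k :: "real ^ 'd"
  assumes p: "p > 0"
  shows "norm (Dl j p n k t) \<le> 2 * real CARD('d) * p + 2 * p"
proof (cases "n = 0")
  case True
  have "norm (Dl j p n k t) = 2 * real CARD('d) * p * \<bar>Dhat (k + t *\<^sub>R axis j 1)\<bar>"
    unfolding Dl_def using p by (simp only: True if_True simp_thms(6) norm_of_real) (simp add: abs_mult)
  also have "\<dots> \<le> 2 * real CARD('d) * p * 1"
    using p by (intro mult_left_mono Dhat_abs) auto
  finally show ?thesis using p by simp
next
  case False
  have "norm (Dl j p n k t) = 2 * p * \<bar>cos (k $ j + t + real n * pi / 2)\<bar>"
    unfolding Dl_def using False p by (simp only: if_False norm_of_real) (simp add: abs_mult)
  also have "\<dots> \<le> 2 * p * 1" using p by (intro mult_left_mono) auto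
  moreover have "0 \<le> 2 * real CARD('d) * p" using p by simp
  ultimately show ?thesis by linarith
qed

lemma Dl_Cl:
  fixes j :: "'d::finite"
  assumes p: "p > 0"
  shows "B.Cl n a (Dl j p 0)"
proof (rule B.Cl_explicit[where fs="\<lambda>k i. Dl j p i k" and C="2 * real CARD('d) * p + 2 * p"])
  fix k :: "real ^ 'd" and i
  show "norm (Dl j p i k 0) \<le> (2 * real CARD('d) * p + 2 * p) * 1 powr (a - real i)"
    using Dl_bound[OF p] by simp
qed (auto intro: Dl_deriv)


lemma Jhat_line:
  "Jhat c p G0 P (k + t *\<^sub>R axis j 1) = (case c of
      CaseA \<Rightarrow> Dl j p 0 k t + Tl P j 0 k t
    | CaseB \<Rightarrow> Dl j p 0 k t * (1 + Tl P j 0 k t)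
    | CaseC \<Rightarrow> Dl j p 0 k t * (complex_of_real G0 + Tl P j 0 k t))"
  by (simp add: Jhat_def Dl_def FT_line split: lace_case.split)

lemma ghat_line:
  "ghat c G0 P (k + t *\<^sub>R axis j 1) = (case c of
      CaseA \<Rightarrow> 1
    | CaseB \<Rightarrow> 1 + Tl P j 0 k t
    | CaseC \<Rightarrow> complex_of_real G0 + Tl P j 0 k t)"
  by (simp add: ghat_def FT_line split: lace_case.split)

lemma J_Cl:
  fixes P :: "int ^ 'd \<Rightarrow> real"
  assumes sum2: "(\<lambda>x. norm (lat x) ^ 2 * \<bar>P x\<bar>) summable_on UNIV"
    and sumM: "(\<lambda>x. norm (lat x) ^ M * \<bar>P x\<bar>) summable_on UNIV"
    and p: "p > 0"
  shows "B.Cl (max M 2) 0 (\<lambda>k t. Jhat c p G0 P (k + t *\<^sub>R axis j 1))"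
    and "B.Cl (max M 2) 0 (\<lambda>k t. ghat c G0 P (k + t *\<^sub>R axis j 1))"
proof -
  have T: "B.Cl (max M 2) 0 (Tl P j 0)" by (rule Tl_Cl[OF sum2 sumM])
  have D: "B.Cl (max M 2) 0 (Dl j p 0)" by (rule Dl_Cl[OF p])
  have T1: "B.Cl (max M 2) 0 (\<lambda>k t. 1 + Tl P j 0 k t)" by (rule B.Cl_add[OF B_Cl_const T])
  have TG: "B.Cl (max M 2) 0 (\<lambda>k t. complex_of_real G0 + Tl P j 0 k t)" by (rule B.Cl_add[OF B_Cl_const T])
  show "B.Cl (max M 2) 0 (\<lambda>k t. Jhat c p G0 P (k + t *\<^sub>R axis j 1))"
  proof (cases c)
    case CaseA
    then show ?thesis unfolding Jhat_line using B.Cl_add[OF D T] by simp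
  next
    case CaseB
    then show ?thesis unfolding Jhat_line using B.Cl_mult[OF D T1] by simp
  next
    case CaseC
    then show ?thesis unfolding Jhat_line using B.Cl_mult[OF D TG] by simp
  qed
  show "B.Cl (max M 2) 0 (\<lambda>k t. ghat c G0 P (k + t *\<^sub>R axis j 1))"
  proof (cases c)
    case CaseA
    then show ?thesis unfolding ghat_line using B_Cl_const by simp
  next
    case CaseB
    then show ?thesis unfolding ghat_line using T1 by simp
  next
    case CaseC
    then show ?thesis unfolding ghat_line using TG by simp
  qed
qed

definition rfl :: "'d \<Rightarrow> 'a::uminus ^ 'd \<Rightarrow> 'a ^ 'd" where
  "rfl j v = (\<chi> i. if i = j then - v $ i else v $ i)"

lemma rfl_rfl: "rfl j (rfl j (v :: 'a::group_add ^ 'd)) = v"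
  by (simp add: rfl_def vec_eq_iff)

lemma rfl_inner: "(rfl j k) \<bullet> lat x = k \<bullet> lat (rfl j x)"
  unfolding inner_vec_def by (rule sum.cong) (auto simp: rfl_def lat_nth)

lemma P_rfl:
  assumes sym: "Zd_symmetric P"
  shows "P (rfl j x) = P x"
proof -
  define s where "s = (\<lambda>i. if i = j then (-1::int) else 1)"
  have "P (\<chi> i. s i * x $ id i) = P x"
    using sym unfolding Zd_symmetric_def
    by (elim allE[of _ id] allE[of _ s] allE[of _ x]) (auto simp: s_def permutes_id)
  moreover have "(\<chi> i. s i * x $ id i) = rfl j x" by (simp add: vec_eq_iff s_def rfl_def)
  ultimately show ?thesis by simp
qed

lemma FT_rfl:
  fixes P :: "int ^ 'd \<Rightarrow> real" and j :: "'d::finite"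
  assumes sym: "Zd_symmetric P"
  shows "FT P (rfl j k) = FT P k"
proof -
  define F where "F x = complex_of_real (P x) * exp (- \<i> * complex_of_real (k \<bullet> lat x))" for x
  have bij: "bij_betw (rfl j) (UNIV :: (int ^ 'd) set) UNIV"
    by (rule bij_betw_byWitness[where f'="rfl j"]) (auto simp: rfl_rfl)
  have "FT P k = infsum F UNIV" unfolding FT_def F_def ..
  also have "\<dots> = infsum (\<lambda>x. F (rfl j x)) UNIV" by (rule infsum_reindex_bij_betw[OF bij, symmetric])
  also have "\<dots> = FT P (rfl j k)"
    unfolding FT_def F_def by (simp add: P_rfl[OF sym] rfl_inner)
  finally show ?thesis by simp
qed

lemma Dhat_rfl: "Dhat (rfl j k) = Dhat k"
  unfolding Dhat_def by (rule arg_cong[where f="\<lambda>s. _ * s"], rule sum.cong) (auto simp: rfl_def)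

lemma Jhat_rfl:
  assumes sym: "Zd_symmetric P"
  shows "Jhat c p G0 P (rfl j k) = Jhat c p G0 P k"
  by (cases c) (simp_all add: Jhat_def FT_rfl[OF sym] Dhat_rfl)

lemma Jhat_even:
  assumes sym: "Zd_symmetric P" and kj: "k $ j = 0"
  shows "Jhat c p G0 P (k + (- t) *\<^sub>R axis j 1) = Jhat c p G0 P (k + t *\<^sub>R axis j 1)"
proof -
  have "rfl j (k + t *\<^sub>R axis j 1) = k + (- t) *\<^sub>R axis j 1"
    using kj by (simp add: rfl_def vec_eq_iff axis_def)
  then show ?thesis using Jhat_rfl[OF sym, of c p G0 j "k + t *\<^sub>R axis j 1"] by simp
qed


lemma powr_neg_nat: "0 < x \<Longrightarrow> x powr (- real n) = inverse (x ^ n)"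
  by (simp add: powr_minus powr_realpow)

theorem lemma4p1:
  fixes P :: "int ^ 'd \<Rightarrow> real" and c :: lace_case
    and p G0 c1 :: real and M :: nat
  assumes d3: "CARD('d) \<ge> 3"
    and sym: "Zd_symmetric P"
    and sum2: "(\<lambda>x. norm (lat x) ^ 2 * \<bar>P x\<bar>) summable_on UNIV"
    and sumM: "(\<lambda>x. norm (lat x) ^ M * \<bar>P x\<bar>) summable_on UNIV"
    and M: "M \<ge> 1"
    and p: "p > 0" and G0: "G0 > 0"
    and J0: "Jhat c p G0 P 0 = 1"
    and c1: "c1 > 0"
    and IR: "\<forall>k\<in>cube. Re (Jhat c p G0 P 0 - Jhat c p G0 P k) \<ge> c1 * norm k ^ 2"
  shows "\<forall>m j. 1 \<le> m \<and> m \<le> M \<longrightarrow>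
    (\<exists>C. \<forall>k\<in>cube. k \<noteq> 0 \<longrightarrow>
       (\<forall>i<m. \<forall>\<^sub>F t in nhds 0.
           partial_dir i j (Ghat c p G0 P) k differentiable at t) \<and>
       norm (partial_dir m j (Ghat c p G0 P) k 0) \<le> C / norm k ^ (2 + m))"
proof (intro allI impI)
  fix m and j :: 'd
  assume mM: "1 \<le> m \<and> m \<le> M"
  define N where "N = max M 2"
  define Jf where "Jf = (\<lambda>k t. Jhat c p G0 P (k + t *\<^sub>R axis j 1))"
  define gf where "gf = (\<lambda>k t. ghat c G0 P (k + t *\<^sub>R axis j 1))"
  define Jd where "Jd = (\<lambda>k t. vector_derivative (Jf k) (at t))"
  define Jdd where "Jdd = (\<lambda>k t. vector_derivative (Jd k) (at t))"
  define hf where "hf = (\<lambda>k t. 1 / (1 - Jf k t))"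
  define K where "K = cube - {0 :: real ^ 'd}"
  define S where "S = (\<lambda>k. {t. Jf k t \<noteq> 1})"
  define R where "R = real CARD('d) * pi"
  have N2: "2 \<le> N" "M \<le> N" by (auto simp: N_def)
  have JB: "B.Cl N 0 Jf" unfolding Jf_def N_def by (rule J_Cl(1)[OF sum2 sumM p])
  have gB: "B.Cl N 0 gf" unfolding gf_def N_def by (rule J_Cl(2)[OF sum2 sumM p])
  obtain CJ where CJ: "\<And>k. smo N (Jf k) UNIV" "\<And>k i. i \<le> N \<Longrightarrow> norm (nvderiv i (Jf k) 0) \<le> CJ"
    using JB unfolding B_Cl_iff by blast
  have nv1: "nvderiv (Suc 0) (Jf k) = Jd k" for k by (simp add: Jd_def)
  have nv2: "nvderiv (Suc (Suc 0)) (Jf k) = Jdd k" for k by (simp add: Jd_def Jdd_def)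
  have Jder: "(Jf k has_vector_derivative Jd k t) (at t)" for k t
    using smo_deriv[OF CJ(1), of 0 t k] N2 by (simp add: Jd_def)
  have Jdder: "(Jd k has_vector_derivative Jdd k t) (at t)" for k t
    using smo_deriv[OF CJ(1), of 1 t k] N2 unfolding nv1[symmetric] nv2[symmetric] by simp
  have shift: "(\<lambda>t. Jf k (t + s)) = Jf (k + s *\<^sub>R axis j 1)" for k s
    by (auto simp: Jf_def fun_eq_iff algebra_simps scaleR_add_left)
  have nvshift: "nvderiv i (Jf k) s = nvderiv i (Jf (k + s *\<^sub>R axis j 1)) 0" for i k s
    using fun_cong[OF nvderiv_shift[of i "Jf k" s], of 0] unfolding shift by simp
  have Jdd_bd: "norm (Jdd k s) \<le> CJ" for k s
  proof -
    have "Jdd k s = nvderiv (Suc (Suc 0)) (Jf k) s" by (simp only: nv2)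
    also have "\<dots> = nvderiv (Suc (Suc 0)) (Jf (k + s *\<^sub>R axis j 1)) 0" by (rule nvshift)
    finally show ?thesis using CJ(2)[of "Suc (Suc 0)" "k + s *\<^sub>R axis j 1"] N2 by simp
  qed
  have Jd_shift: "Jd k s = Jd (k + s *\<^sub>R axis j 1) 0" for k s
    using nvshift[of 1 k s] by (simp add: Jd_def)
  have Jd_zero: "Jd k 0 = 0" if kj: "k $ j = 0" for k
  proof -
    have "vector_derivative (Jf k) (at 0) = 0"
    proof (rule even_deriv0)
      show "Jf k (- t) = Jf k t" for t unfolding Jf_def by (rule Jhat_even[OF sym kj])
      show "Jf k differentiable at 0" using Jder by (rule differentiableI_vector)
    qed
    then show ?thesis by (simp add: Jd_def)
  qed
  have Jd_bd: "norm (Jd k 0) \<le> CJ * norm k" for k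
  proof -
    have "norm (Jd k 0 - Jd k (- (k $ j))) \<le> CJ * \<bar>0 - - (k $ j)\<bar>"
      by (rule mvt_bound[OF Jdder Jdd_bd])
    moreover have "Jd k (- (k $ j)) = 0"
      using Jd_shift[of k "- (k $ j)"] Jd_zero[of "k + (- (k $ j)) *\<^sub>R axis j 1"] by simp
    moreover have "\<bar>k $ j\<bar> \<le> norm k" by (rule component_le_norm_cart)
    moreover have "CJ \<ge> 0" using CJ(2)[of 0 k] norm_ge_zero order_trans by blast
    ultimately show ?thesis by (simp add: mult_left_mono order_trans)
  qed
  have Jf0: "Jf k 0 = Jhat c p G0 P k" for k by (simp add: Jf_def)
  have ReJ: "c1 * norm k ^ 2 \<le> Re (1 - Jf k 0)" if "k \<in> K" for k
    using IR that J0 by (auto simp: K_def Jf0)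
  have ws: "wset K norm R S"
  proof
    fix k assume k: "k \<in> K"
    then show "0 < norm k" by (simp add: K_def)
    have "norm k \<le> (\<Sum>i\<in>UNIV. \<bar>k $ i\<bar>)" by (rule norm_le_l1_cart)
    also have "\<dots> \<le> of_nat (card (UNIV :: 'd set)) * pi"
      by (rule sum_bounded_above) (use k in \<open>auto simp: K_def cube_def\<close>)
    finally show "norm k \<le> R" by (simp add: R_def)
    have "continuous_on UNIV (Jf k)"
      using Jder by (intro continuous_on_vector_derivative) (auto intro: has_vector_derivative_at_within)
    then show "open (S k)" unfolding S_def by (intro open_Collect_neq) auto
    have "0 < c1 * norm k ^ 2" using k c1 by (simp add: K_def)
    then have "Jf k 0 \<noteq> 1" using ReJ[OF k] by auto
    then show "0 \<in> S k" by (simp add: S_def)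
  qed
  interpret Mn: wset K norm R S by (rule ws)
  have JdB: "B.Cl (N - 2) 0 Jdd"
  proof -
    have "B.Cl (Suc (Suc (N - 2))) 0 Jf" using JB N2 by (simp add: Suc_diff_Suc numeral_2_eq_2)
    then have "B.Cl (Suc (N - 2)) (0 - 1) Jd" unfolding Jd_def by (rule B.Cl_deriv)
    then have "B.Cl (N - 2) (0 - 1 - 1) Jdd" unfolding Jdd_def by (rule B.Cl_deriv)
    then show ?thesis by (rule B_Cl_any)
  qed
  have JdM: "Mn.Cl (M - 1) 1 Jd"
  proof -
    have "Mn.Cl (N - 2) 0 Jdd" by (rule Cl_transfer[OF ws JdB])
    then have "Mn.Cl (N - 2) (1 - 1) Jdd" by simp
    then have "Mn.Cl (Suc (N - 2)) 1 Jd"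
    proof (rule Mn.Cl_up[where B=CJ])
      show "(Jd k has_vector_derivative Jdd k t) (at t)" for k t by (rule Jdder)
      show "norm (Jd k 0) \<le> CJ * norm k powr 1" if "k \<in> K" for k
        using Jd_bd[of k] Mn.W_pos[OF that] by simp
    qed
    then show ?thesis by (rule Mn.Cl_le_n) (use N2 in linarith)
  qed
  have gM: "Mn.Cl M 0 gf"
    using Cl_transfer[OF ws gB] by (rule Mn.Cl_le_n) (use N2 in linarith)
  have hbase: "norm (hf k 0) \<le> (1 / c1) * norm k powr (- 2)" if k: "k \<in> K" for k
  proof -
    have pos: "0 < norm k" using Mn.W_pos[OF k] .
    have "c1 * norm k ^ 2 \<le> norm (1 - Jf k 0)"
      using ReJ[OF k] complex_Re_le_cmod order_trans by blast
    moreover have "0 < c1 * norm k ^ 2" using pos c1 by simp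
    ultimately have "norm (hf k 0) \<le> 1 / (c1 * norm k ^ 2)"
      unfolding hf_def by (simp add: norm_divide divide_simps)
    also have "\<dots> = (1 / c1) * norm k powr (- 2)"
      using powr_neg_nat[OF pos, of 2] by (simp add: divide_simps)
    finally show ?thesis .
  qed
  have hder: "(hf k has_vector_derivative Jd k t * hf k t * hf k t) (at t)" if "k \<in> K" "t \<in> S k" for k t
  proof -
    have nz: "1 - Jf k t \<noteq> 0" using that by (simp add: S_def)
    have "((\<lambda>z. 1 / (1 - z)) has_field_derivative 1 / ((1 - Jf k t) * (1 - Jf k t))) (at (Jf k t))"
      using nz by (auto intro!: derivative_eq_intros simp: field_simps)
    from field_vector_diff_chain_at[OF Jder this]
    have "(((\<lambda>z. 1 / (1 - z)) \<circ> Jf k) has_vector_derivative Jd k t * (1 / ((1 - Jf k t) * (1 - Jf k t)))) (at t)" .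
    moreover have "(\<lambda>z. 1 / (1 - z)) \<circ> Jf k = hf k" by (auto simp: hf_def o_def)
    moreover have "Jd k t * (1 / ((1 - Jf k t) * (1 - Jf k t))) = Jd k t * hf k t * hf k t"
      by (simp add: hf_def)
    ultimately show ?thesis by simp
  qed
  have hM: "n \<le> M \<Longrightarrow> Mn.Cl n (- 2) hf" for n
  proof (induction n)
    case 0
    show ?case
    proof (rule Mn.ClI[where C="1 / c1"])
      fix k i assume k: "k \<in> K" and i: "i \<le> (0::nat)"
      then show "norm (nvderiv i (hf k) 0) \<le> 1 / c1 * norm k powr (- 2 - real i)"
        using hbase[OF k] by simp
    qed (simp add: smo_def)
  next
    case (Suc n)
    have h: "Mn.Cl n (- 2) hf" using Suc by simp
    have jd: "Mn.Cl n 1 Jd" using JdM by (rule Mn.Cl_le_n) (use Suc in linarith)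
    have "Mn.Cl n (1 + - 2 + - 2) (\<lambda>k t. Jd k t * hf k t * hf k t)"
      by (rule Mn.Cl_mult[OF Mn.Cl_mult[OF jd h] h])
    then have D: "Mn.Cl n (- 2 - 1) (\<lambda>k t. Jd k t * hf k t * hf k t)" by simp
    show ?case by (rule Mn.Cl_up[OF D hder hbase])
  qed
  have GM: "Mn.Cl m (0 + - 2) (\<lambda>k t. gf k t * hf k t)"
    using Mn.Cl_mult[OF gM hM[OF order_refl]] by (rule Mn.Cl_le_n) (use mM in linarith)
  obtain C where C: "\<And>k. k \<in> K \<Longrightarrow> smo m (\<lambda>t. gf k t * hf k t) (S k)"
    "\<And>k i. k \<in> K \<Longrightarrow> i \<le> m \<Longrightarrow> norm (nvderiv i (\<lambda>t. gf k t * hf k t) 0) \<le> C * norm k powr (0 + - 2 - real i)"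
    using GM by (rule Mn.ClE) auto
  have pd: "partial_dir i j (Ghat c p G0 P) k = nvderiv i (\<lambda>t. gf k t * hf k t)" for i k
    unfolding partial_dir_def by (rule arg_cong[where f="nvderiv i"]) (auto simp: Ghat_def gf_def hf_def Jf_def)
  show "\<exists>C. \<forall>k\<in>cube. k \<noteq> 0 \<longrightarrow>
       (\<forall>i<m. \<forall>\<^sub>F t in nhds 0. partial_dir i j (Ghat c p G0 P) k differentiable at t) \<and>
       norm (partial_dir m j (Ghat c p G0 P) k 0) \<le> C / norm k ^ (2 + m)"
  proof (intro exI[of _ C] ballI impI conjI allI)
    fix k :: "real ^ 'd" assume "k \<in> cube" "k \<noteq> 0"
    then have k: "k \<in> K" by (simp add: K_def)
    fix i assume i: "i < m"
    show "\<forall>\<^sub>F t in nhds 0. partial_dir i j (Ghat c p G0 P) k differentiable at t"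
      unfolding pd eventually_nhds
      using C(1)[OF k] i Mn.S_open[OF k] Mn.S_0[OF k] unfolding smo_def by blast
  next
    fix k :: "real ^ 'd" assume "k \<in> cube" "k \<noteq> 0"
    then have k: "k \<in> K" by (simp add: K_def)
    have pos: "0 < norm k" using Mn.W_pos[OF k] .
    have "norm k powr (0 + - 2 - real m) = norm k powr (- real (2 + m))" by simp
    also have "\<dots> = inverse (norm k ^ (2 + m))" by (rule powr_neg_nat[OF pos])
    finally have e: "norm k powr (0 + - 2 - real m) = inverse (norm k ^ (2 + m))" .
    show "norm (partial_dir m j (Ghat c p G0 P) k 0) \<le> C / norm k ^ (2 + m)"
      using C(2)[OF k order_refl] unfolding pd e by (simp add: divide_inverse)
  qed
qed

end
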